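(* Let $f:\mathbb{R}^n\to\mathbb{R}\cup\{+\infty\}$ be a polyhedral M-convex function with bounded $\operatorname{dom}_{\mathbb{R}} f$. Let $y\in\operatorname{dom}_{\mathbb{R}} f$ with $\phi_{\mathbb{R}}(y)<0$, let $i,j\in N$ be distinct with $f'_{\mathbb{R}}(y;i,j)=\phi_{\mathbb{R}}(y)$, and let $\lambda>0$ satisfy $f(y+\lambda(\chi_i-\chi_j))-f(y)=\lambda\phi_{\mathbb{R}}(y)$. Put $\hat y=y+\lambda(\chi_i-\chi_j)$. Then (i) $\phi_{\mathbb{R}}(\hat y)\ge\phi_{\mathbb{R}}(y)$; (ii) for all distinct $h,k\in N$, $f'_{\mathbb{R}}(\hat y;h,k)\ge\phi_{\mathbb{R}}(y)$, and if equality holds then $f'_{\mathbb{R}}(\hat y;h,k)=\phi_{\mathbb{R}}(\hat y)$ (i.e. $+\chi_h-\chi_k$ is a steepest descent direction at $\hat y$), $k\neq i$, and $h\neq j$.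
   Context: $N=\{1,\dots,n\}$; $\chi_i$ is the $i$-th unit vector. $\operatorname{dom}_{\mathbb{R}} f=\{x\in\mathbb{R}^n:f(x)<+\infty\}$. A polyhedral convex function $f:\mathbb{R}^n\to\mathbb{R}\cup\{+\infty\}$ (epigraph a polyhedron, $\operatorname{dom}_{\mathbb{R}} f\neq\emptyset$) is M-convex if for all $x,y\in\operatorname{dom}_{\mathbb{R}} f$ and every $i$ with $x(i)>y(i)$ there exist $j$ with $x(j)<y(j)$ and $\epsilon_0>0$ such that $f(x)+f(y)\ge f(x-\epsilon(\chi_i-\chi_j))+f(y+\epsilon(\chi_i-\chi_j))$ for all $\epsilon\in[0,\epsilon_0]$. For $x\in\operatorname{dom}_{\mathbb{R}} f$, $f'_{\mathbb{R}}(x;i,j)=\lim_{\alpha\downarrow0}(f(x+\alpha(\chi_i-\chi_j))-f(x))/\alpha$ (possibly $+\infty$), and $\phi_{\mathbb{R}}(x)=\min_{i,j\in N}f'_{\mathbb{R}}(x;i,j)$. *)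

theory Defs
  imports "HOL-Analysis.Analysis"
begin

text \<open>Functions R^n -> R \<union> {+\<infinity>} are modelled as f :: real^'n \<Rightarrow> ereal that never take
  the value -\<infinity>; the ground set N is the finite index type 'n.\<close>

definition chi :: "'n::finite \<Rightarrow> real^'n" where
  "chi i = axis i 1"

definition edom :: "(real^'n::finite \<Rightarrow> ereal) \<Rightarrow> (real^'n) set" where
  "edom f = {x. f x < \<infinity>}"

definition epigraph :: "(real^'n::finite \<Rightarrow> ereal) \<Rightarrow> ((real^'n) \<times> real) set" where
  "epigraph f = {(x, t). f x \<le> ereal t}"

definition polyhedral_convex :: "(real^'n::finite \<Rightarrow> ereal) \<Rightarrow> bool" where
  "polyhedral_convex f \<longleftrightarrow> (\<forall>x. f x \<noteq> -\<infinity>) \<and> polyhedron (epigraph f) \<and> edom f \<noteq> {}"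

definition M_convex :: "(real^'n::finite \<Rightarrow> ereal) \<Rightarrow> bool" where
  "M_convex f \<longleftrightarrow> polyhedral_convex f \<and>
     (\<forall>x\<in>edom f. \<forall>y\<in>edom f. \<forall>i. x $ i > y $ i \<longrightarrow>
        (\<exists>j. x $ j < y $ j \<and> (\<exists>\<epsilon>0>0. \<forall>\<epsilon>\<in>{0..\<epsilon>0}.
           f x + f y \<ge> f (x - \<epsilon> *\<^sub>R (chi i - chi j)) + f (y + \<epsilon> *\<^sub>R (chi i - chi j)))))"

definition dir_deriv :: "(real^'n::finite \<Rightarrow> ereal) \<Rightarrow> real^'n \<Rightarrow> 'n \<Rightarrow> 'n \<Rightarrow> ereal" where
  "dir_deriv f x i j =
     Lim (at_right (0::real)) (\<lambda>\<alpha>. (f (x + \<alpha> *\<^sub>R (chi i - chi j)) - f x) / ereal \<alpha>)"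

definition phi :: "(real^'n::finite \<Rightarrow> ereal) \<Rightarrow> real^'n \<Rightarrow> ereal" where
  "phi f x = Min {dir_deriv f x i j | i j. True}"

end

theory Submission imports Defs begin

lemma chi_nth: "chi i $ a = (if a = i then 1 else 0)"
  by (simp add: chi_def axis_def)

lemma epi_convex:
  assumes pc: "polyhedral_convex f" and fx: "f x = ereal a" and fz: "f z = ereal b"
    and t: "0 \<le> t" "t \<le> 1"
  shows "f ((1 - t) *\<^sub>R x + t *\<^sub>R z) \<le> ereal ((1 - t) * a + t * b)"
proof -
  have cv: "convex (epigraph f)" using pc polyhedron_imp_convex unfolding polyhedral_convex_def by blast
  have "(x, a) \<in> epigraph f" "(z, b) \<in> epigraph f" using fx fz by (auto simp: epigraph_def)
  then have "(1 - t) *\<^sub>R (x, a) + t *\<^sub>R (z, b) \<in> epigraph f"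
    using t by (intro convexD[OF cv]) auto
  then show ?thesis by (simp add: epigraph_def)
qed

lemma quot_mono:
  assumes pc: "polyhedral_convex f" and fx: "f x = ereal r" and ab: "0 < \<alpha>" "\<alpha> \<le> \<beta>"
  shows "(f (x + \<alpha> *\<^sub>R v) - f x) / ereal \<alpha> \<le> (f (x + \<beta> *\<^sub>R v) - f x) / ereal \<beta>"
proof (cases "f (x + \<beta> *\<^sub>R v) = \<infinity>")
  case True
  then show ?thesis using ab fx by (simp add: ereal_divide_ereal)
next
  case False
  have "f (x + \<beta> *\<^sub>R v) \<noteq> -\<infinity>" using pc unfolding polyhedral_convex_def by blast
  with False obtain s where fs: "f (x + \<beta> *\<^sub>R v) = ereal s" by (cases "f (x + \<beta> *\<^sub>R v)") auto
  define t where "t = \<alpha> / \<beta>"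
  have t01: "0 \<le> t" "t \<le> 1" using ab by (auto simp: t_def)
  have eq: "(1 - t) *\<^sub>R x + t *\<^sub>R (x + \<beta> *\<^sub>R v) = x + \<alpha> *\<^sub>R v"
    using ab by (simp add: t_def algebra_simps)
  have le: "f (x + \<alpha> *\<^sub>R v) \<le> ereal ((1 - t) * r + t * s)"
    using epi_convex[OF pc fx fs t01] eq by simp
  have "f (x + \<alpha> *\<^sub>R v) \<noteq> -\<infinity>" using pc unfolding polyhedral_convex_def by blast
  with le obtain u where fu: "f (x + \<alpha> *\<^sub>R v) = ereal u" by (cases "f (x + \<alpha> *\<^sub>R v)") auto
  have "u \<le> (1 - t) * r + t * s" using le fu by simp
  moreover have "(1 - t) * r + t * s = r + \<alpha> * ((s - r) / \<beta>)" using ab by (simp add: t_def field_simps)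
  ultimately have "u - r \<le> \<alpha> * ((s - r) / \<beta>)" by linarith
  then have "(u - r) / \<alpha> \<le> (s - r) / \<beta>" using ab by (simp add: pos_divide_le_eq mult.commute)
  then show ?thesis using fu fs fx ab by (simp add: ereal_divide)
qed

lemma dd_inf:
  assumes pc: "polyhedral_convex f" and fx: "f x = ereal r"
  shows "Lim (at_right (0::real)) (\<lambda>\<alpha>. (f (x + \<alpha> *\<^sub>R v) - f x) / ereal \<alpha>)
       = (INF \<alpha>\<in>{0<..}. (f (x + \<alpha> *\<^sub>R v) - f x) / ereal \<alpha>)"
    (is "Lim _ ?Q = ?L")
proof (rule tendsto_Lim)
  show "at_right (0::real) \<noteq> bot" by simp
  show "(?Q \<longlongrightarrow> ?L) (at_right 0)"
  proof (rule order_tendstoI)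
    fix a assume "a < ?L"
    then show "eventually (\<lambda>\<alpha>. a < ?Q \<alpha>) (at_right 0)"
      unfolding eventually_at_right_field
      by (intro exI[of _ 1]) (auto intro: less_le_trans INF_lower)
  next
    fix a assume "?L < a"
    then obtain a0 where a0: "a0 > 0" "?Q a0 < a" by (auto simp: INF_less_iff)
    show "eventually (\<lambda>\<alpha>. ?Q \<alpha> < a) (at_right 0)"
      unfolding eventually_at_right_field
    proof (intro exI[of _ a0] conjI allI impI)
      fix y :: real assume "0 < y" "y < a0"
      then have "?Q y \<le> ?Q a0" by (intro quot_mono[OF pc fx]) auto
      then show "?Q y < a" using a0(2) by (rule le_less_trans)
    qed (use a0 in auto)
  qed
qed


definition Sp :: "real^'n::finite \<Rightarrow> real^'n \<Rightarrow> real" where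
  "Sp y x = (\<Sum>a\<in>UNIV. max (x$a - y$a) 0)"
definition D1 :: "real^'n::finite \<Rightarrow> real^'n \<Rightarrow> real" where
  "D1 y x = (\<Sum>a\<in>UNIV. \<bar>x$a - y$a\<bar>)"

lemma sum_change:
  fixes g g' :: "'n::finite \<Rightarrow> real"
  assumes "\<And>a. g' a = g a - (if a = i then e1 else 0) - (if a = j then e2 else 0)"
  shows "(\<Sum>a\<in>UNIV. g' a) = (\<Sum>a\<in>UNIV. g a) - e1 - e2"
  using assms by (simp add: sum_subtractf)

lemma cont_Sp: "continuous_on UNIV (\<lambda>z. (z, M + p * Sp y z))"
  unfolding Sp_def by (intro continuous_intros)

lemma cont_D1: "continuous_on A (D1 y)"
  unfolding D1_def by (intro continuous_intros)

lemma Sp_self: "Sp y y = 0" by (simp add: Sp_def)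


lemma fin_of_le:
  fixes A B :: ereal
  assumes "A + B \<le> ereal s" "A \<noteq> -\<infinity>" "B \<noteq> -\<infinity>"
  obtains b c where "A = ereal b" "B = ereal c" "b + c \<le> s"
  using assms by (cases A; cases B) auto

lemma keyK:
  fixes f :: "real^'n::finite \<Rightarrow> ereal"
  assumes M: "M_convex f" and bd: "bounded (edom f)" and fy: "f y = ereal r" and p: "p \<le> 0"
    and loc: "\<And>a b \<epsilon> c. a \<noteq> b \<Longrightarrow> 0 < \<epsilon> \<Longrightarrow> f (y + \<epsilon> *\<^sub>R (chi a - chi b)) = ereal c \<Longrightarrow> r + \<epsilon> * p \<le> c"
    and fx: "f x = ereal v"
  shows "r + p * Sp y x \<le> v"
proof (rule ccontr)
  assume "\<not> ?thesis"
  then have vlt: "v < r + p * Sp y x" by simp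
  define Mv where "Mv = v - p * Sp y x"
  define T where "T = {z. (z, Mv + p * Sp y z) \<in> epigraph f}"
  have ninf: "\<And>z. f z \<noteq> -\<infinity>" using M unfolding M_convex_def polyhedral_convex_def by blast
  have ex: "\<And>x y i. x \<in> edom f \<Longrightarrow> y \<in> edom f \<Longrightarrow> x$i > y$i \<Longrightarrow> \<exists>j. x$j < y$j \<and> (\<exists>\<epsilon>0>0. \<forall>\<epsilon>\<in>{0..\<epsilon>0}.
           f x + f y \<ge> f (x - \<epsilon> *\<^sub>R (chi i - chi j)) + f (y + \<epsilon> *\<^sub>R (chi i - chi j)))"
    using M unfolding M_convex_def by blast
  have xT: "x \<in> T" using fx by (simp add: T_def epigraph_def Mv_def)
  have "closed (epigraph f)" using M polyhedron_imp_closed unfolding M_convex_def polyhedral_convex_def by blast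
  then have clT: "closed T" unfolding T_def
    using closed_vimage[OF _ cont_Sp] by (simp add: vimage_def)
  have Tsub: "T \<subseteq> edom f" by (auto simp: T_def epigraph_def edom_def)
  have "compact T" using clT bounded_subset[OF bd Tsub] by (simp add: compact_eq_bounded_closed)
  then obtain xs where xsT: "xs \<in> T" and xsmin: "\<And>z. z \<in> T \<Longrightarrow> D1 y xs \<le> D1 y z"
    using continuous_attains_inf[of T "D1 y"] xT cont_D1 by blast
  have "f xs \<le> ereal (Mv + p * Sp y xs)" using xsT by (simp add: T_def epigraph_def)
  then obtain a where fxs: "f xs = ereal a" and ale: "a \<le> Mv + p * Sp y xs"
    using ninf[of xs] by (cases "f xs") auto
  have yin: "y \<in> edom f" using fy by (simp add: edom_def)
  have xsin: "xs \<in> edom f" using fxs by (simp add: edom_def)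
  have "xs \<noteq> y"
  proof
    assume "xs = y"
    then have "r \<le> Mv" using fxs fy ale by (simp add: Sp_self)
    then show False using vlt by (simp add: Mv_def)
  qed
  then obtain i where ine: "xs$i \<noteq> y$i" by (auto simp: vec_eq_iff)
  show False
  proof (cases "xs$i > y$i")
    case True
    from ex[OF xsin yin True] obtain j e0 where j: "xs$j < y$j" and e0: "e0 > 0"
      and exch: "\<And>\<epsilon>. \<epsilon> \<in> {0..e0} \<Longrightarrow> f xs + f y \<ge> f (xs - \<epsilon> *\<^sub>R (chi i - chi j)) + f (y + \<epsilon> *\<^sub>R (chi i - chi j))"
      by blast
    have ij: "i \<noteq> j" using True j by auto
    define e where "e = min e0 (min (xs$i - y$i) (y$j - xs$j))"
    have epos: "e > 0" using e0 True j by (simp add: e_def)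
    define u where "u = xs - e *\<^sub>R (chi i - chi j)"
    have "f u + f (y + e *\<^sub>R (chi i - chi j)) \<le> ereal (a + r)"
      using exch[of e] epos fxs fy by (simp add: e_def u_def)
    then obtain b c where fu: "f u = ereal b" and fw: "f (y + e *\<^sub>R (chi i - chi j)) = ereal c" and bc: "b + c \<le> a + r"
      by (rule fin_of_le[OF _ ninf ninf])
    have cge: "r + e * p \<le> c" using loc[OF ij epos fw] .
    have un: "\<And>a. u $ a = xs $ a - e * ((if a = i then 1 else 0) - (if a = j then 1 else 0))"
      by (simp add: u_def chi_nth)
    have Su: "Sp y u = Sp y xs - e - 0" unfolding Sp_def
      by (rule sum_change[where i=i and j=j]) (use un ij True j in \<open>auto simp: e_def\<close>)
    have Du: "D1 y u = D1 y xs - e - e" unfolding D1_def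
      by (rule sum_change[where i=i and j=j]) (use un ij True j in \<open>auto simp: e_def\<close>)
    have "p * Sp y xs = p * Sp y u + e * p" unfolding Su by (simp add: algebra_simps)
    then have "b \<le> Mv + p * Sp y u" using bc cge ale by linarith
    then have "u \<in> T" using fu by (simp add: T_def epigraph_def)
    from xsmin[OF this] Du epos show False by simp
  next
    case False
    with ine have lt: "y$i > xs$i" by simp
    from ex[OF yin xsin lt] obtain j e0 where j: "y$j < xs$j" and e0: "e0 > 0"
      and exch: "\<And>\<epsilon>. \<epsilon> \<in> {0..e0} \<Longrightarrow> f y + f xs \<ge> f (y - \<epsilon> *\<^sub>R (chi i - chi j)) + f (xs + \<epsilon> *\<^sub>R (chi i - chi j))"
      by blast
    have ij: "j \<noteq> i" using lt j by auto
    define e where "e = min e0 (min (y$i - xs$i) (xs$j - y$j))"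
    have epos: "e > 0" using e0 lt j by (simp add: e_def)
    define u where "u = xs + e *\<^sub>R (chi i - chi j)"
    have weq: "y - e *\<^sub>R (chi i - chi j) = y + e *\<^sub>R (chi j - chi i)" by (simp add: algebra_simps)
    have "f (y - e *\<^sub>R (chi i - chi j)) + f u \<le> ereal (r + a)"
      using exch[of e] epos fxs fy by (simp add: e_def u_def)
    then have "f u + f (y + e *\<^sub>R (chi j - chi i)) \<le> ereal (a + r)"
      unfolding weq by (simp add: add.commute del: plus_ereal.simps)
    then obtain b c where fu: "f u = ereal b" and fw: "f (y + e *\<^sub>R (chi j - chi i)) = ereal c" and bc: "b + c \<le> a + r"
      by (rule fin_of_le[OF _ ninf ninf])
    have cge: "r + e * p \<le> c" using loc[OF ij epos fw] .
    have un: "\<And>a. u $ a = xs $ a + e * ((if a = i then 1 else 0) - (if a = j then 1 else 0))"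
      by (simp add: u_def chi_nth)
    have Su: "Sp y u = Sp y xs - 0 - e" unfolding Sp_def
      by (rule sum_change[where i=i and j=j]) (use un ij lt j in \<open>auto simp: e_def\<close>)
    have Du: "D1 y u = D1 y xs - e - e" unfolding D1_def
      by (rule sum_change[where i=i and j=j]) (use un ij lt j in \<open>auto simp: e_def\<close>)
    have "p * Sp y xs = p * Sp y u + e * p" unfolding Su by (simp add: algebra_simps)
    then have "b \<le> Mv + p * Sp y u" using bc cge ale by linarith
    then have "u \<in> T" using fu by (simp add: T_def epigraph_def)
    from xsmin[OF this] Du epos show False by simp
  qed
qed


lemma dd_eq:
  assumes pc: "polyhedral_convex f" and fx: "f x = ereal r"
  shows "dir_deriv f x a b = (INF \<alpha>\<in>{0<..}. (f (x + \<alpha> *\<^sub>R (chi a - chi b)) - f x) / ereal \<alpha>)"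
  unfolding dir_deriv_def by (rule dd_inf[OF pc fx])

lemma inf_ge:
  assumes pc: "polyhedral_convex f" and fx: "f x = ereal r0" and lam: "lam > 0"
    and H: "\<And>\<epsilon> c. 0 < \<epsilon> \<Longrightarrow> \<epsilon> \<le> lam \<Longrightarrow> f (x + \<epsilon> *\<^sub>R v) = ereal c \<Longrightarrow> \<epsilon> * q \<le> c - r0"
  shows "ereal q \<le> (INF \<alpha>\<in>{0<..}. (f (x + \<alpha> *\<^sub>R v) - f x) / ereal \<alpha>)"
proof (rule INF_greatest)
  fix \<alpha> :: real assume "\<alpha> \<in> {0<..}"
  then have a: "\<alpha> > 0" by simp
  define \<epsilon> where "\<epsilon> = min \<alpha> lam"
  have e: "0 < \<epsilon>" "\<epsilon> \<le> lam" "\<epsilon> \<le> \<alpha>" using a lam by (auto simp: \<epsilon>_def)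
  have mono: "(f (x + \<epsilon> *\<^sub>R v) - f x) / ereal \<epsilon> \<le> (f (x + \<alpha> *\<^sub>R v) - f x) / ereal \<alpha>"
    using quot_mono[OF pc fx e(1) e(3)] .
  have ninf: "f (x + \<epsilon> *\<^sub>R v) \<noteq> -\<infinity>" using pc unfolding polyhedral_convex_def by blast
  have "ereal q \<le> (f (x + \<epsilon> *\<^sub>R v) - f x) / ereal \<epsilon>"
  proof (cases "f (x + \<epsilon> *\<^sub>R v)")
    case (real c)
    have "\<epsilon> * q \<le> c - r0" using H[OF e(1) e(2) real] .
    then have "q \<le> (c - r0) / \<epsilon>" using e by (simp add: pos_le_divide_eq mult.commute)
    then show ?thesis using real fx e by (simp add: ereal_divide)
  next
    case PInf then show ?thesis using fx e by (simp add: ereal_divide_ereal)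
  next
    case MInf then show ?thesis using ninf by simp
  qed
  then show "ereal q \<le> (f (x + \<alpha> *\<^sub>R v) - f x) / ereal \<alpha>" using mono by (rule order_trans)
qed

lemma sum_two:
  fixes A B :: real
  shows "(\<Sum>a\<in>(UNIV::'n::finite set). (if a = i then A else 0) + (if a = h then B else 0)) = A + B"
  by (simp add: sum.distrib)

lemma Sp_bound:
  fixes y :: "real^'n::finite"
  assumes "\<And>a. max ((x - y) $ a) 0 \<le> (if a = i then A else 0) + (if a = h then B else 0)"
  shows "Sp y x \<le> A + B"
proof -
  have "Sp y x \<le> (\<Sum>a\<in>UNIV. (if a = i then A else 0) + (if a = h then B else 0))"
    unfolding Sp_def using assms by (intro sum_mono) simp
  then show ?thesis by (simp only: sum_two)
qed


lemma coord_bounds: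
  fixes lam \<epsilon> :: real and a i j h k :: 'a
  assumes "0 < \<epsilon>" "\<epsilon> \<le> lam" "i \<noteq> j" "h \<noteq> k"
  defines "v \<equiv> lam * ((if a = i then 1 else 0) - (if a = j then 1 else 0)) + \<epsilon> * ((if a = h then 1 else 0) - (if a = k then 1 else 0))"
  shows "max v 0 \<le> (if a = i then lam else 0) + (if a = h then \<epsilon> else 0)"
    and "k = i \<Longrightarrow> max v 0 \<le> (if a = i then lam - \<epsilon> else 0) + (if a = h then \<epsilon> else 0)"
    and "h = j \<Longrightarrow> max v 0 \<le> (if a = i then lam else 0) + (if a = h then 0 else 0)"
  using assms unfolding v_def
  by (cases "a = i"; cases "a = j"; cases "a = h"; cases "a = k"; simp)+

theorem mainTheorem14:
  fixes f :: "real^'n::finite \<Rightarrow> ereal" and y :: "real^'n" and i j :: 'n and lam :: real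
  assumes "M_convex f"
    and "bounded (edom f)"
    and "y \<in> edom f"
    and "phi f y < 0"
    and "i \<noteq> j"
    and "dir_deriv f y i j = phi f y"
    and "lam > 0"
    and "f (y + lam *\<^sub>R (chi i - chi j)) - f y = ereal lam * phi f y"
  shows "phi f (y + lam *\<^sub>R (chi i - chi j)) \<ge> phi f y \<and>
         (\<forall>h k. h \<noteq> k \<longrightarrow>
           dir_deriv f (y + lam *\<^sub>R (chi i - chi j)) h k \<ge> phi f y \<and>
           (dir_deriv f (y + lam *\<^sub>R (chi i - chi j)) h k = phi f y \<longrightarrow>
              dir_deriv f (y + lam *\<^sub>R (chi i - chi j)) h k = phi f (y + lam *\<^sub>R (chi i - chi j))
              \<and> k \<noteq> i \<and> h \<noteq> j))"
proof -
  note M = assms(1) and bd = assms(2) and lam = assms(7)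
  have pc: "polyhedral_convex f" using M unfolding M_convex_def by blast
  have ninf: "\<And>z. f z \<noteq> -\<infinity>" using pc unfolding polyhedral_convex_def by blast
  obtain r where fy: "f y = ereal r" using assms(3) ninf[of y] by (cases "f y") (auto simp: edom_def)
  define yh where "yh = y + lam *\<^sub>R (chi i - chi j)"
  have fin: "finite {dir_deriv f x a b |a b. True}" for x
    by (rule finite_subset[of _ "(\<lambda>(a,b). dir_deriv f x a b) ` UNIV"]) auto
  have phile: "\<And>x a b. phi f x \<le> dir_deriv f x a b"
    unfolding phi_def by (rule Min_le[OF fin]) blast
  have phiin: "\<And>x. \<exists>a b. phi f x = dir_deriv f x a b"
  proof -
    fix x
    have "phi f x \<in> {dir_deriv f x a b |a b. True}"
      unfolding phi_def by (rule Min_in[OF fin]) auto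
    then show "\<exists>a b. phi f x = dir_deriv f x a b" by blast
  qed
  have a8: "f yh - ereal r = ereal lam * phi f y" using assms(8) fy by (simp add: yh_def)
  have "phi f y \<noteq> -\<infinity>"
  proof
    assume "phi f y = -\<infinity>"
    then have "f yh - ereal r = -\<infinity>" using a8 lam by simp
    then show False using ninf[of yh] by (cases "f yh") auto
  qed
  then obtain p where php: "phi f y = ereal p" and pneg: "p < 0" using assms(4)
    by (cases "phi f y") auto
  have fyh: "f yh = ereal (r + lam * p)" using a8 php by (cases "f yh") auto
  have loc: "\<And>a b \<epsilon> c. a \<noteq> b \<Longrightarrow> 0 < \<epsilon> \<Longrightarrow> f (y + \<epsilon> *\<^sub>R (chi a - chi b)) = ereal c \<Longrightarrow> r + \<epsilon> * p \<le> c"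
  proof -
    fix a b \<epsilon> c assume ab: "a \<noteq> b" and e: "0 < \<epsilon>" and fc: "f (y + \<epsilon> *\<^sub>R (chi a - chi b)) = ereal c"
    have "ereal p \<le> dir_deriv f y a b" using phile[of y a b] php by simp
    also have "\<dots> \<le> (f (y + \<epsilon> *\<^sub>R (chi a - chi b)) - f y) / ereal \<epsilon>"
      unfolding dd_eq[OF pc fy] using e by (intro INF_lower) auto
    also have "\<dots> = ereal ((c - r) / \<epsilon>)" using fc fy e by (simp add: ereal_divide)
    finally have "p \<le> (c - r) / \<epsilon>" by simp
    then show "r + \<epsilon> * p \<le> c" using e by (simp add: pos_le_divide_eq mult.commute)
  qed
  have K: "\<And>x v. f x = ereal v \<Longrightarrow> r + p * Sp y x \<le> v"
    using keyK[OF M bd fy _ loc] pneg by simp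
  have main: "\<And>h k. h \<noteq> k \<Longrightarrow> ereal p \<le> dir_deriv f yh h k \<and>
       ((k = i \<or> h = j) \<longrightarrow> ereal p < dir_deriv f yh h k)"
  proof -
    fix h k :: 'n assume hk: "h \<noteq> k"
    have xn: "\<And>\<epsilon> a. (yh + \<epsilon> *\<^sub>R (chi h - chi k) - y) $ a =
        lam * ((if a = i then 1 else 0) - (if a = j then 1 else 0)) + \<epsilon> * ((if a = h then 1 else 0) - (if a = k then 1 else 0))"
      by (simp add: yh_def chi_nth)
    have g1: "ereal p \<le> dir_deriv f yh h k"
      unfolding dd_eq[OF pc fyh]
    proof (rule inf_ge[OF pc fyh lam])
      fix \<epsilon> c assume e: "0 < \<epsilon>" "\<epsilon> \<le> lam" and fc: "f (yh + \<epsilon> *\<^sub>R (chi h - chi k)) = ereal c"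
      have "Sp y (yh + \<epsilon> *\<^sub>R (chi h - chi k)) \<le> lam + \<epsilon>"
        by (rule Sp_bound[where i=i and h=h], unfold xn, rule coord_bounds(1)[OF e assms(5) hk])
      moreover have "r + p * Sp y (yh + \<epsilon> *\<^sub>R (chi h - chi k)) \<le> c" using K[OF fc] .
      ultimately have "r + p * (lam + \<epsilon>) \<le> c"
        using pneg by (smt (verit) mult_left_mono_neg)
      then show "\<epsilon> * p \<le> c - (r + lam * p)" by (simp add: algebra_simps)
    qed
    have g2: "ereal p < dir_deriv f yh h k" if kh: "k = i \<or> h = j"
    proof -
      have "ereal 0 \<le> dir_deriv f yh h k"
        unfolding dd_eq[OF pc fyh]
      proof (rule inf_ge[OF pc fyh lam])
        fix \<epsilon> c assume e: "0 < \<epsilon>" "\<epsilon> \<le> lam" and fc: "f (yh + \<epsilon> *\<^sub>R (chi h - chi k)) = ereal c"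
        have "Sp y (yh + \<epsilon> *\<^sub>R (chi h - chi k)) \<le> lam"
        proof (cases "k = i")
          case True
          have "Sp y (yh + \<epsilon> *\<^sub>R (chi h - chi k)) \<le> (lam - \<epsilon>) + \<epsilon>"
            by (rule Sp_bound[where i=i and h=h], unfold xn, rule coord_bounds(2)[OF e assms(5) hk True])
          then show ?thesis by simp
        next
          case False
          then have hj: "h = j" using kh by simp
          have "Sp y (yh + \<epsilon> *\<^sub>R (chi h - chi k)) \<le> lam + 0"
            by (rule Sp_bound[where i=i and h=h], unfold xn, rule coord_bounds(3)[OF e assms(5) hk hj])
          then show ?thesis by simp
        qed
        moreover have "r + p * Sp y (yh + \<epsilon> *\<^sub>R (chi h - chi k)) \<le> c" using K[OF fc] .
        ultimately have "r + p * lam \<le> c"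
          using pneg by (smt (verit) mult_left_mono_neg)
        then show "\<epsilon> * 0 \<le> c - (r + lam * p)" by (simp add: algebra_simps)
      qed
      moreover have "ereal p < ereal 0" using pneg by simp
      ultimately show ?thesis by (rule less_le_trans[rotated])
    qed
    show "ereal p \<le> dir_deriv f yh h k \<and> ((k = i \<or> h = j) \<longrightarrow> ereal p < dir_deriv f yh h k)"
      using g1 g2 by blast
  qed
  have same: "\<And>h. dir_deriv f yh h h = 0"
    unfolding dd_eq[OF pc fyh] using fyh by (simp add: zero_ereal_def)
  have allge: "\<And>h k. ereal p \<le> dir_deriv f yh h k"
  proof -
    fix h k show "ereal p \<le> dir_deriv f yh h k"
      using main[of h k] same[of h] pneg by (cases "h = k") auto
  qed
  have part1: "ereal p \<le> phi f yh"
    using phiin[of yh] allge by metis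
  show ?thesis
    unfolding yh_def[symmetric] php
  proof (intro conjI allI impI part1)
    fix h k :: 'n assume hk: "h \<noteq> k"
    show "ereal p \<le> dir_deriv f yh h k" using allge .
    assume eq: "dir_deriv f yh h k = ereal p"
    show "dir_deriv f yh h k = phi f yh" using eq part1 phile[of yh h k] by simp
    show "k \<noteq> i" using main[OF hk] eq by auto
    show "h \<noteq> j" using main[OF hk] eq by auto
  qed
qed

end
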